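(* Let \[ r_2 = \frac{1}{4} \left(1 + \sqrt{33} - \sqrt{2 \left(9 + \sqrt{33} \right)} \right). \] Then \[ \operatorname{Li}_{2}(r_2^6) - 3 \operatorname{Li}_{2}(r_2^4) - 8 \operatorname{Li}_{2}(r_2^3) + 21 \operatorname{Li}_{2}(r_2^2) + 24 \operatorname{Li}_{2}(r_2) - 11 \zeta(2) = -6 \log^{2}(r_2). \]
   Context: $\operatorname{Li}_2(x)=\sum_{n\ge1}x^n/n^2$ is the dilogarithm and $\zeta(2)=\pi^2/6$. *)

theory Defs
  imports "HOL-Analysis.Analysis"
begin

definition Li2 :: "real \<Rightarrow> real" where
  "Li2 x = (\<Sum>n. x ^ Suc n / (real (Suc n))^2)"

definition zeta2 :: real where
  "zeta2 = pi^2 / 6"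

end

theory Submission
  imports Defs "HOL-Real_Asymp.Real_Asymp"
begin

lemma Li2_summable: "\<bar>x\<bar> \<le> 1 \<Longrightarrow> summable (\<lambda>n. x ^ Suc n / (real (Suc n))^2)"
proof (rule summable_comparison_test'[where g = "\<lambda>n. 1 / (real (Suc n))^2"])
  show "summable (\<lambda>n. 1 / (real (Suc n))^2)"
    using inverse_squares_sums by (simp add: sums_iff)
next
  fix n assume "\<bar>x\<bar> \<le> 1"
  then have "\<bar>x\<bar> ^ Suc n \<le> 1" by (intro power_le_one) auto
  then show "norm (x ^ Suc n / (real (Suc n))^2) \<le> 1 / (real (Suc n))^2"
    by (simp add: abs_mult power_abs divide_right_mono)
qed

lemma Li2_one: "Li2 1 = pi^2 / 6"
  using inverse_squares_sums unfolding Li2_def by (simp add: sums_iff)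

lemma Li2_zero: "Li2 0 = 0"
  unfolding Li2_def by simp

definition cLi :: "nat \<Rightarrow> real" where "cLi n = 1 / (real n)^2"

lemma Li2_powser: "\<bar>x\<bar> \<le> 1 \<Longrightarrow> Li2 x = (\<Sum>n. cLi n * x ^ n)"
proof -
  assume x: "\<bar>x\<bar> \<le> 1"
  have "(\<lambda>n. cLi (Suc n) * x ^ Suc n) sums Li2 x"
    using Li2_summable[OF x] unfolding Li2_def cLi_def
    by (simp add: summable_sums field_simps)
  then have "(\<lambda>n. cLi n * x ^ n) sums (Li2 x + cLi 0 * x^0)"
    by (subst sums_Suc_iff[symmetric])
  then show ?thesis by (simp add: cLi_def sums_iff)
qed

lemma diffs_cLi: "diffs cLi n = 1 / real (Suc n)"
  unfolding diffs_def cLi_def by (simp add: power2_eq_square)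

lemma ln_powser: "\<bar>x\<bar> < 1 \<Longrightarrow> (\<lambda>n. x ^ Suc n / real (Suc n)) sums (- ln (1 - x))"
proof -
  assume x: "\<bar>x\<bar> < 1"
  have "(\<lambda>n. - ((-(-x))^n) / of_nat n) sums ln (1 + (-x))"
    by (rule ln_series') (use x in simp)
  then have "(\<lambda>n. - (x^n / real n)) sums ln (1 - x)" by simp
  then have "(\<lambda>n. x^n / real n) sums (- ln (1 - x))"
    using sums_minus by fastforce
  then have "(\<lambda>n. x^(Suc n) / real (Suc n)) sums (- ln (1 - x) - x^0 / real 0)"
    by (subst sums_Suc_iff) simp
  then show ?thesis by simp
qed

lemma Li2_deriv:
  assumes "\<bar>x\<bar> < 1" "x \<noteq> 0"
  shows "(Li2 has_real_derivative (- ln (1 - x) / x)) (at x)"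
proof -
  have D: "((\<lambda>z. \<Sum>n. cLi n * z^n) has_field_derivative (\<Sum>n. diffs cLi n * x^n)) (at x)"
  proof (rule termdiffs_strong'[where K = 1])
    fix z :: real assume "norm z < 1"
    then have "summable (\<lambda>n. z ^ Suc n / (real (Suc n))^2)" by (intro Li2_summable) simp
    then have "summable (\<lambda>n. cLi (Suc n) * z ^ Suc n)" by (simp add: cLi_def field_simps)
    then show "summable (\<lambda>n. cLi n * z ^ n)" by (subst summable_Suc_iff[symmetric])
  qed (use assms in simp)
  moreover have E1: "(\<Sum>n. diffs cLi n * x^n) = - ln (1 - x) / x"
  proof -
    have "(\<lambda>n. x ^ Suc n / real (Suc n)) sums (- ln (1 - x))" by (rule ln_powser) fact
    then have "(\<lambda>n. (x ^ Suc n / real (Suc n)) / x) sums (- ln (1 - x) / x)"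
      by (rule sums_divide)
    moreover have "(\<lambda>n. (x ^ Suc n / real (Suc n)) / x) = (\<lambda>n. diffs cLi n * x^n)"
    proof
      fix n
      have "x ^ Suc n / real (Suc n) / x = x ^ n / real (Suc n)" using assms by simp
      then show "x ^ Suc n / real (Suc n) / x = diffs cLi n * x ^ n" by (simp add: diffs_cLi)
    qed
    ultimately show ?thesis by (simp add: sums_iff)
  qed
  moreover have E2: "eventually (\<lambda>z. (\<Sum>n. cLi n * z^n) = Li2 z) (nhds x)"
  proof -
    have "open {z::real. \<bar>z\<bar> < 1}" by (intro open_Collect_less continuous_intros)
    then have "eventually (\<lambda>z. z \<in> {z::real. \<bar>z\<bar> < 1}) (nhds x)"
      using assms by (intro eventually_nhds_in_open) auto
    then show ?thesis by eventually_elim (simp add: Li2_powser)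
  qed
  ultimately show ?thesis
    using DERIV_cong_ev[OF refl E2 E1] D by blast
qed

lemma Li2_cont: "continuous_on {-1..1} Li2"
proof -
  have "uniform_limit {-1..1} (\<lambda>n x. \<Sum>i<n. x ^ Suc i / (real (Suc i))^2) (\<lambda>x. suminf (\<lambda>i. x ^ Suc i / (real (Suc i))^2)) sequentially"
  proof (rule Weierstrass_m_test)
    show "summable (\<lambda>n. 1 / (real (Suc n))^2)"
      using inverse_squares_sums by (simp add: sums_iff)
  next
    fix n and x :: real assume "x \<in> {-1..1}"
    then have "\<bar>x\<bar> ^ Suc n \<le> 1" by (intro power_le_one) auto
    then show "norm (x ^ Suc n / (real (Suc n))^2) \<le> 1 / (real (Suc n))^2"
      by (simp add: abs_mult power_abs divide_right_mono)
  qed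
  then have "continuous_on {-1..1} (\<lambda>x. suminf (\<lambda>i. x ^ Suc i / (real (Suc i))^2))"
  proof (rule uniform_limit_theorem[rotated])
    show "\<forall>\<^sub>F n in sequentially. continuous_on {-1..1} (\<lambda>x. \<Sum>i<n. x ^ Suc i / (real (Suc i))^2)"
      by (intro always_eventually allI continuous_intros) auto
  qed auto
  then show ?thesis unfolding Li2_def .
qed

definition Lr :: "real \<Rightarrow> real" where "Lr x = Li2 x + ln x * ln (1 - x) / 2"
definition Lr' :: "real \<Rightarrow> real" where "Lr' x = - ln (1 - x) / (2 * x) - ln x / (2 * (1 - x))"

lemma Lr_deriv:
  assumes "0 < x" "x < 1"
  shows "(Lr has_real_derivative Lr' x) (at x)"
proof -
  have d1: "(Li2 has_real_derivative (- ln (1 - x) / x)) (at x)"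
    by (rule Li2_deriv) (use assms in auto)
  have d2: "((\<lambda>x. ln x * ln (1 - x) / 2) has_real_derivative
      ((1 / x) * ln (1 - x) + ln x * (- 1 / (1 - x))) / 2) (at x)"
    using assms by (auto intro!: derivative_eq_intros simp: field_simps)
  have "((\<lambda>x. Li2 x + ln x * ln (1 - x) / 2) has_real_derivative
      (- ln (1 - x) / x) + ((1 / x) * ln (1 - x) + ln x * (- 1 / (1 - x))) / 2) (at x)"
    using DERIV_add[OF d1 d2] by simp
  moreover have "(- ln (1 - x) / x) + ((1 / x) * ln (1 - x) + ln x * (- 1 / (1 - x))) / 2 = Lr' x"
    using assms unfolding Lr'_def by (simp add: field_simps)
  ultimately show ?thesis unfolding Lr_def[abs_def] by simp
qed

lemma Lr_deriv_chain[derivative_intros]: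
  assumes "(f has_real_derivative f') (at x within S)" "0 < f x" "f x < 1"
  shows "((\<lambda>y. Lr (f y)) has_real_derivative (Lr' (f x) * f')) (at x within S)"
  using DERIV_chain2[OF Lr_deriv[OF assms(2,3)] assms(1)] .

lemma Lr_cont_at: "0 < x \<Longrightarrow> x < 1 \<Longrightarrow> isCont Lr x"
  using Lr_deriv DERIV_isCont by blast

lemma Li2_right0: "(Li2 \<longlongrightarrow> 0) (at_right 0)"
proof -
  have "continuous_on {0..1} Li2" using Li2_cont by (rule continuous_on_subset) auto
  then have "(Li2 \<longlongrightarrow> Li2 0) (at 0 within {0..1})"
    by (simp add: continuous_on_def)
  then show ?thesis by (simp add: at_within_Icc_at_right Li2_zero)
qed

lemma Li2_1minus: "((\<lambda>x. Li2 (1 - x)) \<longlongrightarrow> pi^2/6) (at_right 0)"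
proof -
  have "continuous_on {0..1} (\<lambda>x. Li2 (1 - x))"
    by (rule continuous_on_compose2[OF Li2_cont]) (auto intro!: continuous_intros)
  then have "((\<lambda>x. Li2 (1 - x)) \<longlongrightarrow> Li2 (1 - 0)) (at 0 within {0..1})"
    unfolding continuous_on_def by (drule_tac x=0 in bspec) auto
  then show ?thesis by (simp add: at_within_Icc_at_right Li2_one)
qed

lemma lnln_0: "((\<lambda>x::real. ln x * ln (1 - x)) \<longlongrightarrow> 0) (at_right 0)"
  by real_asymp

lemma Lr_tendsto_0: "(Lr \<longlongrightarrow> 0) (at_right 0)"
proof -
  have "((\<lambda>x. Li2 x + ln x * ln (1 - x) / 2) \<longlongrightarrow> 0 + 0 / 2) (at_right 0)"
    by (intro tendsto_intros Li2_right0 lnln_0) auto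
  then show ?thesis unfolding Lr_def[abs_def] by simp
qed

lemma Lr_reflect:
  assumes "0 < x" "x < 1"
  shows "Lr x + Lr (1 - x) = pi^2/6"
proof -
  define h where "h y = Lr y + Lr (1 - y)" for y
  have "\<exists>c. \<forall>y\<in>{0<..<1}. h y = c"
  proof (rule has_field_derivative_zero_constant)
    fix y :: real assume y: "y \<in> {0<..<1}"
    have "(h has_real_derivative (Lr' y * 1 + Lr' (1 - y) * (0 - 1))) (at y)"
      unfolding h_def[abs_def] using y by (auto intro!: derivative_eq_intros)
    moreover have "Lr' y * 1 + Lr' (1 - y) * (0 - 1) = 0"
      using y unfolding Lr'_def by (simp add: field_simps)
    ultimately show "(h has_real_derivative 0) (at y within {0<..<1})"
      by (simp add: has_field_derivative_at_within)
  qed (simp add: convex_real_interval)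
  then obtain c where c: "\<And>y. y \<in> {0<..<1} \<Longrightarrow> h y = c" by blast
  have lim1: "(h \<longlongrightarrow> pi^2/6) (at_right 0)"
  proof -
    have "((\<lambda>y. Li2 y + Li2 (1 - y) + ln y * ln (1 - y)) \<longlongrightarrow> 0 + pi^2/6 + 0) (at_right 0)"
      by (intro tendsto_intros Li2_right0 Li2_1minus lnln_0)
    moreover have "\<And>y. Li2 y + Li2 (1 - y) + ln y * ln (1 - y) = h y"
      unfolding h_def Lr_def by (simp add: field_simps)
    ultimately show ?thesis by simp
  qed
  have "eventually (\<lambda>y. y \<in> {0<..<1}) (at_right (0::real))"
    by (rule eventually_at_right_real) simp
  then have ev: "eventually (\<lambda>y. c = h y) (at_right 0)"
    by eventually_elim (simp add: c)
  have "(h \<longlongrightarrow> c) (at_right 0)"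
    using tendsto_cong[OF ev] tendsto_const by blast
  then have "c = pi^2/6" using lim1 by (rule tendsto_unique[rotated 1]) simp
  then show ?thesis using c[of x] assms h_def by simp
qed

lemma Lr_five_deriv0:
  fixes x y :: real
  assumes x: "0 < x" "x < 1" and y: "0 < y" "y < 1"
  shows "Lr' y - Lr' (x*y) * x - Lr' (x*(1-y)/(1-x*y)) * (-(x*(1-x))/(1-x*y)^2)
          - Lr' (y*(1-x)/(1-x*y)) * ((1-x)/(1-x*y)^2) = 0"
proof -
  have xy1: "x*y < 1*y" using x y by (intro mult_strict_right_mono) auto
  have xy: "0 < x*y" "x*y < 1" using x y xy1 by (simp, linarith)
  then have d: "0 < 1 - x*y" by simp
  have e1: "1 - x*(1-y)/(1-x*y) = (1-x)/(1-x*y)" using d by (simp add: field_simps)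
  have e2: "1 - y*(1-x)/(1-x*y) = (1-y)/(1-x*y)" using d by (simp add: field_simps)
  have l1: "ln (x*(1-y)/(1-x*y)) = ln x + ln (1-y) - ln (1-x*y)"
    using x y d by (simp add: ln_div ln_mult)
  have l2: "ln (y*(1-x)/(1-x*y)) = ln y + ln (1-x) - ln (1-x*y)"
    using x y d by (simp add: ln_div ln_mult)
  have l3: "ln ((1-x)/(1-x*y)) = ln (1-x) - ln (1-x*y)"
    using x y d by (simp add: ln_div)
  have l4: "ln ((1-y)/(1-x*y)) = ln (1-y) - ln (1-x*y)"
    using x y d by (simp add: ln_div)
  have l5: "ln (x*y) = ln x + ln y" using x y by (simp add: ln_mult)
  define A where "A = ln x"
  define B where "B = ln y"
  define C where "C = ln (1-x)"
  define D where "D = ln (1-y)"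
  define E where "E = ln (1-x*y)"
  have nz: "x \<noteq> 0" "y \<noteq> 0" "1 - x \<noteq> 0" "1 - y \<noteq> 0" "1 - x*y \<noteq> 0" using x y d by auto
  have T0: "Lr' y = D*(-1/(2*y)) + B*(-1/(2*(1-y)))"
  proof -
    have g: "\<And>q. q \<noteq> 0 \<Longrightarrow> - D / (2 * y) - B / (2 * q) = D*(-1/(2*y)) + B*(-1/(2*q))"
      using nz by (simp add: field_simps)
    show ?thesis unfolding Lr'_def B_def[symmetric] D_def[symmetric] by (rule g) (use nz in simp)
  qed
  have T1: "-(Lr' (x*y) * x) = E*(1/(2*y)) + A*(x/(2*(1-x*y))) + B*(x/(2*(1-x*y)))"
  proof -
    have g: "\<And>w. w \<noteq> 0 \<Longrightarrow> -((- E / (2 * (x*y)) - (A + B) / (2 * w)) * x) = E*(1/(2*y)) + A*(x/(2*w)) + B*(x/(2*w))"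
      using nz by (simp add: field_simps)
    show ?thesis unfolding Lr'_def l5 A_def[symmetric] B_def[symmetric] E_def[symmetric]
      by (rule g) (use nz in simp)
  qed
  have T2: "-(Lr' (x*(1-y)/(1-x*y)) * (-(x*(1-x))/(1-x*y)^2)) =
     C*(-(1-x)/(2*(1-y)*(1-x*y))) + E*((1-x)/(2*(1-y)*(1-x*y)) + x/(2*(1-x*y)))
     + A*(-x/(2*(1-x*y))) + D*(-x/(2*(1-x*y)))"
  proof -
    have u: "Lr' (x*(1-y)/(1-x*y)) = -(C-E)/(2*(x*(1-y)/(1-x*y))) - (A+D-E)/(2*((1-x)/(1-x*y)))"
      unfolding Lr'_def e1 l1 l3 A_def C_def D_def E_def by simp
    have g: "\<And>w p q. w \<noteq> 0 \<Longrightarrow> p \<noteq> 0 \<Longrightarrow> q \<noteq> 0 \<Longrightarrow>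
      -((-(C-E)/(2*(x*q/w)) - (A+D-E)/(2*(p/w))) * (-(x*p)/w^2)) =
     C*(-p/(2*q*w)) + E*(p/(2*q*w) + x/(2*w))
     + A*(-x/(2*w)) + D*(-x/(2*w))"
      using nz by (simp add: field_simps power2_eq_square)
    show ?thesis unfolding u by (rule g) (use nz in simp_all)
  qed
  have T3: "-(Lr' (y*(1-x)/(1-x*y)) * ((1-x)/(1-x*y)^2)) =
     D*(1/(2*y*(1-x*y))) + E*(-1/(2*y*(1-x*y)) - (1-x)/(2*(1-y)*(1-x*y)))
     + B*((1-x)/(2*(1-y)*(1-x*y))) + C*((1-x)/(2*(1-y)*(1-x*y)))"
  proof -
    have u: "Lr' (y*(1-x)/(1-x*y)) = -(D-E)/(2*(y*(1-x)/(1-x*y))) - (B+C-E)/(2*((1-y)/(1-x*y)))"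
      unfolding Lr'_def e2 l2 l4 B_def C_def D_def E_def by simp
    have g: "\<And>w p q. w \<noteq> 0 \<Longrightarrow> p \<noteq> 0 \<Longrightarrow> q \<noteq> 0 \<Longrightarrow>
      -((-(D-E)/(2*(y*p/w)) - (B+C-E)/(2*(q/w))) * (p/w^2)) =
     D*(1/(2*y*w)) + E*(-1/(2*y*w) - p/(2*q*w))
     + B*(p/(2*q*w)) + C*(p/(2*q*w))"
      using nz by (simp add: field_simps power2_eq_square)
    show ?thesis unfolding u by (rule g) (use nz in simp_all)
  qed
  have cB: "-1/(2*(1-y)) + x/(2*(1-x*y)) + (1-x)/(2*(1-y)*(1-x*y)) = 0"
  proof -
    have g: "\<And>w q. w \<noteq> 0 \<Longrightarrow> q \<noteq> 0 \<Longrightarrow> -1/(2*q) + x/(2*w) + (1-x)/(2*q*w) = (-w + x*q + (1-x))/(2*q*w)"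
      by (simp add: field_simps)
    have "-(1-x*y) + x*(1-y) + (1-x) = 0" by (simp add: algebra_simps)
    then show ?thesis using g[of "1-x*y" "1-y"] nz by simp
  qed
  have cC: "-(1-x)/(2*(1-y)*(1-x*y)) + (1-x)/(2*(1-y)*(1-x*y)) = 0"
    by (simp only: minus_divide_left[symmetric] add.left_inverse)
  have cD: "-1/(2*y) + -x/(2*(1-x*y)) + 1/(2*y*(1-x*y)) = 0"
  proof -
    have g: "\<And>w. w \<noteq> 0 \<Longrightarrow> -1/(2*y) + -x/(2*w) + 1/(2*y*w) = (-w - x*y + 1)/(2*y*w)"
      using nz by (simp add: field_simps)
    have "-(1-x*y) - x*y + 1 = 0" by (simp add: algebra_simps)
    then show ?thesis using g[of "1-x*y"] nz by simp
  qed
  have cE: "1/(2*y) + ((1-x)/(2*(1-y)*(1-x*y)) + x/(2*(1-x*y))) + (-1/(2*y*(1-x*y)) - (1-x)/(2*(1-y)*(1-x*y))) = 0"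
  proof -
    have g: "\<And>w q. w \<noteq> 0 \<Longrightarrow> q \<noteq> 0 \<Longrightarrow>
       1/(2*y) + ((1-x)/(2*q*w) + x/(2*w)) + (-1/(2*y*w) - (1-x)/(2*q*w)) = (w + x*y - 1)/(2*y*w)"
      using nz by (simp add: field_simps)
    have "(1-x*y) + x*y - 1 = 0" by (simp add: algebra_simps)
    then show ?thesis using g[of "1-x*y" "1-y"] nz by simp
  qed
  have "Lr' y - Lr' (x*y) * x - Lr' (x*(1-y)/(1-x*y)) * (-(x*(1-x))/(1-x*y)^2)
          - Lr' (y*(1-x)/(1-x*y)) * ((1-x)/(1-x*y)^2)
      = Lr' y + -(Lr' (x*y) * x) + -(Lr' (x*(1-y)/(1-x*y)) * (-(x*(1-x))/(1-x*y)^2))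
          + -(Lr' (y*(1-x)/(1-x*y)) * ((1-x)/(1-x*y)^2))" by simp
  also have "\<dots> = B * (-1/(2*(1-y)) + x/(2*(1-x*y)) + (1-x)/(2*(1-y)*(1-x*y)))
     + C * (-(1-x)/(2*(1-y)*(1-x*y)) + (1-x)/(2*(1-y)*(1-x*y)))
     + D * (-1/(2*y) + -x/(2*(1-x*y)) + 1/(2*y*(1-x*y)))
     + E * (1/(2*y) + ((1-x)/(2*(1-y)*(1-x*y)) + x/(2*(1-x*y))) + (-1/(2*y*(1-x*y)) - (1-x)/(2*(1-y)*(1-x*y))))"
    unfolding T0 T1 T2 T3 by (simp add: algebra_simps)
  also have "\<dots> = 0" unfolding cB cC cD cE by simp
  finally show ?thesis .
qed

lemma Lr_comp0:
  assumes "(f \<longlongrightarrow> 0) (at_right 0)" "eventually (\<lambda>y. f y > 0) (at_right (0::real))"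
  shows "((\<lambda>y. Lr (f y)) \<longlongrightarrow> 0) (at_right 0)"
proof -
  have "filterlim f (at_right 0) (at_right 0)"
    using assms by (rule tendsto_imp_filterlim_at_right)
  then show ?thesis using filterlim_compose[OF Lr_tendsto_0] by blast
qed

lemma Lr_five:
  fixes x y :: real
  assumes x: "0 < x" "x < 1" and y: "0 < y" "y < 1"
  shows "Lr x + Lr y = Lr (x*y) + Lr (x*(1-y)/(1-x*y)) + Lr (y*(1-x)/(1-x*y))"
proof -
  have bnds: "0 < x*z \<and> x*z < 1 \<and> 0 < x*(1-z)/(1-x*z) \<and> x*(1-z)/(1-x*z) < 1 \<and>
      0 < z*(1-x)/(1-x*z) \<and> z*(1-x)/(1-x*z) < 1 \<and> 1 - x*z \<noteq> 0" if z: "0 < z" "z < 1" for z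
  proof -
    have xy1: "x*z < 1*z" using x z by (intro mult_strict_right_mono) auto
    have xy: "0 < x*z" "x*z < 1" using x z xy1 by (simp, linarith)
    then have d: "0 < 1 - x*z" by simp
    have "x*(1-z) < 1 - x*z" using x by (simp add: algebra_simps)
    moreover have "z*(1-x) < 1 - x*z" using z by (simp add: algebra_simps)
    ultimately show ?thesis using xy d x z by (auto simp: field_simps)
  qed
  define g where "g z = Lr z - Lr (x*z) - Lr (x*(1-z)/(1-x*z)) - Lr (z*(1-x)/(1-x*z))" for z
  have "\<exists>c. \<forall>z\<in>{0<..<1}. g z = c"
  proof (rule has_field_derivative_zero_constant)
    fix z :: real assume zz: "z \<in> {0<..<1}"
    then have z: "0 < z" "z < 1" by auto
    note b = bnds[OF z]
    have d1: "((\<lambda>z. x*z) has_real_derivative x) (at z)"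
      by (auto intro!: derivative_eq_intros)
    have d2: "((\<lambda>z. x*(1-z)/(1-x*z)) has_real_derivative (-(x*(1-x))/(1-x*z)^2)) (at z)"
      using b by (auto intro!: derivative_eq_intros simp: field_simps power2_eq_square)
    have d3: "((\<lambda>z. z*(1-x)/(1-x*z)) has_real_derivative ((1-x)/(1-x*z)^2)) (at z)"
      using b by (auto intro!: derivative_eq_intros simp: field_simps power2_eq_square)
    have "(g has_real_derivative (Lr' z * 1 - Lr' (x*z) * x - Lr' (x*(1-z)/(1-x*z)) * (-(x*(1-x))/(1-x*z)^2)
          - Lr' (z*(1-x)/(1-x*z)) * ((1-x)/(1-x*z)^2))) (at z)"
      unfolding g_def[abs_def]
      by (intro DERIV_diff Lr_deriv_chain d1 d2 d3 DERIV_ident) (use b z in auto)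
    moreover have "Lr' z * 1 - Lr' (x*z) * x - Lr' (x*(1-z)/(1-x*z)) * (-(x*(1-x))/(1-x*z)^2)
          - Lr' (z*(1-x)/(1-x*z)) * ((1-x)/(1-x*z)^2) = 0"
      using Lr_five_deriv0[OF x z] by simp
    ultimately show "(g has_real_derivative 0) (at z within {0<..<1})"
      by (simp add: has_field_derivative_at_within)
  qed (simp add: convex_real_interval)
  then obtain c where c: "\<And>z. z \<in> {0<..<1} \<Longrightarrow> g z = c" by blast
  have ev0: "eventually (\<lambda>z. z \<in> {0<..<1}) (at_right (0::real))"
    by (rule eventually_at_right_real) simp
  have lim: "(g \<longlongrightarrow> 0 - 0 - Lr x - 0) (at_right 0)"
    unfolding g_def[abs_def]
  proof (intro tendsto_diff)
    show "(Lr \<longlongrightarrow> 0) (at_right 0)" by (rule Lr_tendsto_0)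
    show "((\<lambda>z. Lr (x*z)) \<longlongrightarrow> 0) (at_right 0)"
    proof (rule Lr_comp0)
      show "((\<lambda>z. x*z) \<longlongrightarrow> 0) (at_right 0)" by (auto intro!: tendsto_eq_intros)
      show "eventually (\<lambda>z. x*z > 0) (at_right 0)" using ev0 by eventually_elim (use bnds in auto)
    qed
    show "((\<lambda>z. Lr (z*(1-x)/(1-x*z))) \<longlongrightarrow> 0) (at_right 0)"
    proof (rule Lr_comp0)
      show "((\<lambda>z. z*(1-x)/(1-x*z)) \<longlongrightarrow> 0) (at_right 0)" by (auto intro!: tendsto_eq_intros)
      show "eventually (\<lambda>z. z*(1-x)/(1-x*z) > 0) (at_right 0)" using ev0 by eventually_elim (use bnds in auto)
    qed
    have "((\<lambda>z. x*(1-z)/(1-x*z)) \<longlongrightarrow> x*(1-0)/(1-x*0)) (at_right 0)"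
      by (intro tendsto_intros) auto
    then have "((\<lambda>z. x*(1-z)/(1-x*z)) \<longlongrightarrow> x) (at_right 0)" by simp
    then show "((\<lambda>z. Lr (x*(1-z)/(1-x*z))) \<longlongrightarrow> Lr x) (at_right 0)"
      by (rule isCont_tendsto_compose[OF Lr_cont_at[OF x]])
  qed
  have ev: "eventually (\<lambda>z. c = g z) (at_right 0)"
    using ev0 by eventually_elim (simp add: c)
  have "(g \<longlongrightarrow> c) (at_right 0)"
    using tendsto_cong[OF ev] tendsto_const by blast
  then have "c = 0 - 0 - Lr x - 0" using lim by (rule tendsto_unique[rotated 1]) simp
  then have "g y = - Lr x" using c[of y] y by simp
  then show ?thesis unfolding g_def by simp
qed

type_synonym q4 = "int \<times> int \<times> int \<times> int"

fun nfm :: "q4 \<Rightarrow> q4 \<Rightarrow> q4" where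
  "nfm (a0,a1,a2,a3) (b0,b1,b2,b3) =
    (let c0 = a0*b0; c1 = a0*b1+a1*b0; c2 = a0*b2+a1*b1+a2*b0; c3 = a0*b3+a1*b2+a2*b1+a3*b0;
         c4 = a1*b3+a2*b2+a3*b1; c5 = a2*b3+a3*b2; c6 = a3*b3
     in (c0 - c4 - c5 - 7*c6, c1 + c4 + 6*c6, c2 + 6*c4 + 7*c5 + 42*c6, c3 + c4 + 7*c5 + 14*c6))"

fun nfv :: "real \<Rightarrow> q4 \<Rightarrow> real" where
  "nfv r (a,b,c,d) = of_int a + of_int b * r + of_int c * r^2 + of_int d * r^3"

lemma nfm_ok:
  assumes r4: "r^4 = r^3 + 6*r^2 + r - 1"
  shows "nfv r (nfm p q) = nfv r p * nfv r q"
proof -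
  obtain a0 a1 a2 a3 where p: "p = (a0,a1,a2,a3)" by (cases p) auto
  obtain b0 b1 b2 b3 where q: "q = (b0,b1,b2,b3)" by (cases q) auto
  have "nfv r p * nfv r q = nfv r (nfm p q) + (r^4 - (r^3 + 6*r^2 + r - 1)) *
     (of_int (a1*b3+a2*b2+a3*b1) + of_int (a2*b3+a3*b2) * (r+1) + of_int (a3*b3) * (r^2+r+7))"
    unfolding p q by (simp add: Let_def algebra_simps power2_eq_square power3_eq_cube power4_eq_xxxx)
  then show ?thesis using r4 by simp
qed

fun nfsub :: "q4 \<Rightarrow> q4 \<Rightarrow> q4" where
  "nfsub (a0,a1,a2,a3) (b0,b1,b2,b3) = (a0-b0, a1-b1, a2-b2, a3-b3)"

lemma nfsub_ok: "nfv r (nfsub p q) = nfv r p - nfv r q"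
  by (cases p; cases q) (simp add: algebra_simps)

function nfpw :: "q4 \<Rightarrow> nat \<Rightarrow> q4" where
  "nfpw p n = (if n = 0 then (1,0,0,0) else
     (let q = nfpw (nfm p p) (n div 2) in if even n then q else nfm p q))"
  by auto
termination by (relation "Wellfounded.measure snd") auto

declare nfpw.simps[simp del]

lemma nfpw_ok:
  assumes r4: "r^4 = r^3 + 6*r^2 + r - 1"
  shows "nfv r (nfpw p n) = nfv r p ^ n"
proof (induction p n rule: nfpw.induct)
  case (1 p n)
  show ?case
  proof (cases "n = 0")
    case True then show ?thesis by (simp add: nfpw.simps)
  next
    case False
    have IH: "nfv r (nfpw (nfm p p) (n div 2)) = (nfv r p * nfv r p) ^ (n div 2)"
      using 1 False by (simp add: nfm_ok[OF r4])
    show ?thesis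
    proof (cases "even n")
      case True
      then have "n = 2 * (n div 2)" by simp
      then have "nfv r p ^ n = (nfv r p * nfv r p) ^ (n div 2)"
        by (metis power2_eq_square power_mult)
      then show ?thesis using False True IH by (simp add: nfpw.simps[of p n] Let_def)
    next
      case odd: False
      then have "n = Suc (2 * (n div 2))" by presburger
      then have "nfv r p ^ n = nfv r p * (nfv r p * nfv r p) ^ (n div 2)"
        by (metis power2_eq_square power_mult power_Suc)
      then show ?thesis using False odd IH by (simp add: nfpw.simps[of p n] Let_def nfm_ok[OF r4])
    qed
  qed
qed

definition gl :: "q4 list" where
  "gl = [(0,1,0,0),(-1,2,3,1),(0,2,2,-3),(1,1,0,0),(2,0,0,0),(1,2,0,0)]"

fun vals :: "real \<Rightarrow> q4 list \<Rightarrow> int list \<Rightarrow> real" where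
  "vals r (g#gs) (k#ks) = nfv r g powi k * vals r gs ks"
| "vals r _ _ = 1"

fun nums :: "q4 list \<Rightarrow> int list \<Rightarrow> q4" where
  "nums (g#gs) (k#ks) = nfm (nfpw g (nat k)) (nums gs ks)"
| "nums _ _ = (1,0,0,0)"

fun dens :: "q4 list \<Rightarrow> int list \<Rightarrow> q4" where
  "dens (g#gs) (k#ks) = nfm (nfpw g (nat (-k))) (dens gs ks)"
| "dens _ _ = (1,0,0,0)"

lemma vals_frac:
  assumes r4: "r^4 = r^3 + 6*r^2 + r - 1" and pos: "\<forall>g\<in>set gs. nfv r g > 0"
  shows "vals r gs ks = nfv r (nums gs ks) / nfv r (dens gs ks) \<and> nfv r (nums gs ks) > 0 \<and> nfv r (dens gs ks) > 0"
  using pos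
proof (induction gs arbitrary: ks)
  case Nil then show ?case by simp
next
  case (Cons g gs)
  show ?case
  proof (cases ks)
    case Nil then show ?thesis by simp
  next
    case (Cons k ks')
    have g: "nfv r g > 0" using Cons.prems by simp
    have IH: "vals r gs ks' = nfv r (nums gs ks') / nfv r (dens gs ks')"
      "nfv r (nums gs ks') > 0" "nfv r (dens gs ks') > 0" using Cons.IH[of ks'] Cons.prems by auto
    have pw: "nfv r g powi k = nfv r g ^ nat k / nfv r g ^ nat (-k)"
      using g by (simp add: power_int_def field_simps)
    show ?thesis using IH g unfolding Cons
      by (simp add: nfm_ok[OF r4] nfpw_ok[OF r4] pw)
  qed
qed

definition val :: "real \<Rightarrow> int list \<Rightarrow> real" where "val r e = vals r gl e"

definition cchk :: "int list \<Rightarrow> int list \<Rightarrow> bool" where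
  "cchk e e' = (nfm (nfsub (dens gl e) (nums gl e)) (dens gl e') = nfm (nums gl e') (dens gl e))"

locale rctx =
  fixes r :: real
  assumes r4: "r^4 = r^3 + 6*r^2 + r - 1"
  and gpos: "\<forall>g\<in>set gl. nfv r g > 0"
begin

lemma val_frac: "val r e = nfv r (nums gl e) / nfv r (dens gl e)" "nfv r (nums gl e) > 0" "nfv r (dens gl e) > 0"
  using vals_frac[OF r4 gpos] unfolding val_def by auto

lemma val_pos: "val r e > 0"
  using val_frac by simp

lemma cchk_sound: "cchk e e' \<Longrightarrow> 1 - val r e = val r e'"
proof -
  assume c: "cchk e e'"
  define N where "N = nfv r (nums gl e)"
  define D where "D = nfv r (dens gl e)"
  define N' where "N' = nfv r (nums gl e')"
  define D' where "D' = nfv r (dens gl e')"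
  have "nfv r (nfm (nfsub (dens gl e) (nums gl e)) (dens gl e')) = nfv r (nfm (nums gl e') (dens gl e))"
    using c unfolding cchk_def by simp
  then have "(D - N) * D' = N' * D" unfolding N_def D_def N'_def D'_def
    by (simp add: nfm_ok[OF r4] nfsub_ok)
  moreover have "D > 0" "D' > 0" using val_frac unfolding D_def D'_def by auto
  ultimately have "1 - N / D = N' / D'" by (simp add: field_simps)
  then show ?thesis using val_frac unfolding N_def D_def N'_def D'_def by simp
qed

end

definition vadd :: "int list \<Rightarrow> int list \<Rightarrow> int list" where "vadd a b = map2 (+) a b"
definition vsub :: "int list \<Rightarrow> int list \<Rightarrow> int list" where "vsub a b = map2 (-) a b"

lemma vals_add: "length a = length b \<Longrightarrow> \<forall>g\<in>set gs. nfv r g > 0 \<Longrightarrow>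
   vals r gs (map2 (+) a b) = vals r gs a * vals r gs b"
proof (induction gs arbitrary: a b)
  case Nil then show ?case by simp
next
  case (Cons g gs)
  show ?case
  proof (cases a)
    case Nil then show ?thesis using Cons by simp
  next
    case (Cons k ks)
    then obtain m ms where b: "b = m # ms" using Cons.prems by (cases b) auto
    have g: "nfv r g \<noteq> 0" using Cons.prems by auto
    show ?thesis using Cons.IH[of ks ms] Cons.prems g unfolding Cons b
      by (simp add: power_int_add)
  qed
qed

lemma vals_sub: "length a = length b \<Longrightarrow> \<forall>g\<in>set gs. nfv r g > 0 \<Longrightarrow>
   vals r gs (map2 (-) a b) = vals r gs a / vals r gs b"
proof (induction gs arbitrary: a b)
  case Nil then show ?case by simp
next
  case (Cons g gs)
  show ?case
  proof (cases a)
    case Nil then show ?thesis using Cons by simp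
  next
    case (Cons k ks)
    then obtain m ms where b: "b = m # ms" using Cons.prems by (cases b) auto
    have g: "nfv r g \<noteq> 0" using Cons.prems by auto
    show ?thesis using Cons.IH[of ks ms] Cons.prems g unfolding Cons b
      by (simp add: power_int_diff)
  qed
qed

definition inCP :: "(int list \<times> int list) list \<Rightarrow> int list \<Rightarrow> int list \<Rightarrow> bool" where
  "inCP CP u u' = ((u,u') \<in> set CP \<or> (u',u) \<in> set CP)"

definition cpok :: "(int list \<times> int list) list \<Rightarrow> bool" where
  "cpok CP = list_all (\<lambda>(u,u'). length u = 6 \<and> length u' = 6 \<and> cchk u u') CP"

datatype ent = Fv int "int list" "int list" "int list" "int list" "int list" | Rf int "int list" "int list"

fun valid :: "(int list \<times> int list) list \<Rightarrow> ent \<Rightarrow> bool" where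
  "valid CP (Fv c a a' b b' p') = (inCP CP a a' \<and> inCP CP b b' \<and> inCP CP (vadd a b) p')"
| "valid CP (Rf c u u') = inCP CP u u'"

definition z6 :: "int list" where "z6 = [0,0,0,0,0,0]"

fun expand :: "ent \<Rightarrow> (int list \<times> int) list" where
  "expand (Fv c a a' b b' p') = [(a,c),(b,c),(vadd a b,-c),(vsub (vadd a b') p', -c),(vsub (vadd b a') p',-c)]"
| "expand (Rf c u u') = [(u,c),(u',c),(z6,-c)]"

fun addto :: "int list \<Rightarrow> int \<Rightarrow> (int list \<times> int) list \<Rightarrow> (int list \<times> int) list" where
  "addto e c [] = (if c = 0 then [] else [(e,c)])"
| "addto e c ((f,d)#xs) = (if e = f then (if c + d = 0 then xs else (f, c+d) # xs) else (f,d) # addto e c xs)"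

definition normf :: "(int list \<times> int) list \<Rightarrow> (int list \<times> int) list" where
  "normf xs = foldr (\<lambda>(e,c) acc. addto e c acc) xs []"

definition comb :: "ent list \<Rightarrow> (int list \<times> int) list" where
  "comb cs = concat (map expand cs)"

definition negf :: "(int list \<times> int) list \<Rightarrow> (int list \<times> int) list" where
  "negf xs = map (\<lambda>(e,c). (e,-c)) xs"

definition sem :: "(int list \<Rightarrow> real) \<Rightarrow> (int list \<times> int) list \<Rightarrow> real" where
  "sem F xs = sum_list (map (\<lambda>(e,c). of_int c * F e) xs)"

lemma sem_append: "sem F (xs @ ys) = sem F xs + sem F ys"
  unfolding sem_def by simp

lemma sem_Cons: "sem F ((e,c)#xs) = of_int c * F e + sem F xs"
  by (simp add: sem_def)

lemma sem_Nil: "sem F [] = 0"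
  by (simp add: sem_def)

lemma sem_addto: "sem F (addto e c xs) = of_int c * F e + sem F xs"
proof (induction e c xs rule: addto.induct)
  case (1 e c) show ?case by (simp add: sem_def)
next
  case (2 e c f d xs)
  show ?case
  proof (cases "e = f")
    case True
    show ?thesis
    proof (cases "c + d = 0")
      case True2: True
      then have "of_int c * F f + of_int d * F f = (0::real)"
        by (metis distrib_right of_int_add of_int_0 mult_zero_left)
      then show ?thesis using True True2 by (simp add: sem_Cons algebra_simps)
    next
      case False then show ?thesis using True by (simp add: sem_Cons algebra_simps)
    qed
  next
    case False then show ?thesis using 2 by (simp add: sem_Cons algebra_simps)
  qed
qed

lemma normf_Cons: "normf ((e,c)#xs) = addto e c (normf xs)"
  by (simp add: normf_def)

lemma sem_normf: "sem F (normf xs) = sem F xs"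
proof (induction xs)
  case Nil then show ?case by (simp add: normf_def)
next
  case (Cons a xs) then show ?case by (cases a) (simp add: normf_Cons sem_Cons sem_addto)
qed

lemma sem_negf: "sem F (negf xs) = - sem F xs"
  unfolding negf_def sem_def by (induction xs) auto

lemma sem_comb: "(\<And>c. c \<in> set cs \<Longrightarrow> sem F (expand c) = 0) \<Longrightarrow> sem F (comb cs) = 0"
  unfolding comb_def by (induction cs) (auto simp: sem_append[symmetric] sem_def)

context rctx
begin

lemma val_add: "length a = length b \<Longrightarrow> val r (vadd a b) = val r a * val r b"
  unfolding val_def vadd_def using vals_add gpos by blast

lemma val_sub: "length a = length b \<Longrightarrow> val r (vsub a b) = val r a / val r b"
  unfolding val_def vsub_def using vals_sub gpos by blast

lemma len_vadd: "length (vadd a b) = min (length a) (length b)"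
  unfolding vadd_def by simp

lemma cp_sound:
  assumes "cpok CP" "inCP CP u u'"
  shows "1 - val r u = val r u'" "length u = 6" "length u' = 6"
proof -
  have all: "\<And>p q. (p,q) \<in> set CP \<Longrightarrow> length p = 6 \<and> length q = 6 \<and> cchk p q"
    using assms(1) unfolding cpok_def list_all_iff by fastforce
  have h: "1 - val r u = val r u' \<and> length u = 6 \<and> length u' = 6"
  proof (cases "(u,u') \<in> set CP")
    case True then show ?thesis using all[OF True] cchk_sound by auto
  next
    case False
    then have 2: "(u',u) \<in> set CP" using assms(2) unfolding inCP_def by blast
    then have "1 - val r u' = val r u" using all[OF 2] cchk_sound by auto
    then show ?thesis using all[OF 2] by auto
  qed
  then show "1 - val r u = val r u'" "length u = 6" "length u' = 6" by auto
qed

lemma val_z6: "val r z6 = 1"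
  unfolding val_def z6_def gl_def by simp

lemma Lr_one: "Lr 1 = pi^2/6"
  unfolding Lr_def by (simp add: Li2_one)

lemma ent_sound:
  assumes cp: "cpok CP" and v: "valid CP en"
  shows "sem (\<lambda>e. Lr (val r e)) (expand en) = 0"
proof (cases en)
  case (Rf c u u')
  then have i: "inCP CP u u'" using v by simp
  note cs = cp_sound[OF cp i]
  have "0 < val r u" "val r u < 1" using val_pos[of u] val_pos[of u'] cs(1) by auto
  then have "Lr (val r u) + Lr (1 - val r u) = pi^2/6" by (rule Lr_reflect)
  then have h: "Lr (val r u) + Lr (val r u') = pi^2/6" using cs(1) by simp
  have "sem (\<lambda>e. Lr (val r e)) (expand (Rf c u u')) = of_int c * (Lr (val r u) + Lr (val r u') - pi^2/6)"
    by (simp add: sem_def val_z6 Lr_one algebra_simps)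
  also have "\<dots> = 0" using h by simp
  finally show ?thesis unfolding Rf .
next
  case (Fv c a a' b b' p')
  then have ia: "inCP CP a a'" and ib: "inCP CP b b'" and ip: "inCP CP (vadd a b) p'" using v by auto
  note ca = cp_sound[OF cp ia] and cb = cp_sound[OF cp ib] and cpp = cp_sound[OF cp ip]
  define x where "x = val r a"
  define y where "y = val r b"
  have x: "0 < x" "x < 1" using val_pos[of a] val_pos[of a'] ca(1) unfolding x_def by auto
  have y: "0 < y" "y < 1" using val_pos[of b] val_pos[of b'] cb(1) unfolding y_def by auto
  have xy: "val r (vadd a b) = x * y" unfolding x_def y_def using ca cb by (simp add: val_add)
  have p': "val r p' = 1 - x*y" using cpp(1) xy by simp
  have t1: "val r (vsub (vadd a b') p') = x * (1 - y) / (1 - x*y)"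
    using ca cb cpp p' by (simp add: val_add val_sub len_vadd x_def y_def)
  have t2: "val r (vsub (vadd b a') p') = y * (1 - x) / (1 - x*y)"
    using ca cb cpp p' by (simp add: val_add val_sub len_vadd x_def y_def)
  have "Lr x + Lr y = Lr (x*y) + Lr (x*(1-y)/(1-x*y)) + Lr (y*(1-x)/(1-x*y))"
    by (rule Lr_five) (use x y in auto)
  then have h: "Lr x + Lr y - Lr (x*y) - Lr (x*(1-y)/(1-x*y)) - Lr (y*(1-x)/(1-x*y)) = 0" by simp
  have "sem (\<lambda>e. Lr (val r e)) (expand (Fv c a a' b b' p')) =
      of_int c * (Lr x + Lr y - Lr (x*y) - Lr (x*(1-y)/(1-x*y)) - Lr (y*(1-x)/(1-x*y)))"
    unfolding expand.simps sem_def using xy t1 t2 by (simp add: x_def[symmetric] y_def[symmetric] algebra_simps)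
  also have "\<dots> = 0" using h by simp
  finally show ?thesis unfolding Fv .
qed

lemma cert_sound:
  assumes cp: "cpok CP" and v: "list_all (valid CP) cs" and n: "normf (comb cs @ negf tgt) = []"
  shows "sem (\<lambda>e. Lr (val r e)) tgt = 0"
proof -
  let ?F = "\<lambda>e. Lr (val r e)"
  have "sem ?F (comb cs) = 0"
    by (rule sem_comb) (use ent_sound[OF cp] v in \<open>auto simp: list_all_iff\<close>)
  moreover have "sem ?F (comb cs @ negf tgt) = 0"
    using sem_normf[of ?F "comb cs @ negf tgt"] n by (simp add: sem_def)
  ultimately show ?thesis by (simp add: sem_append sem_negf)
qed

end

definition CP0 :: "(int list \<times> int list) list" where
  "CP0 = [([5,(-1),(-1),0,0,1],[1,0,0,(-1),1,0]),
   ([10,(-2),(-2),0,0,2],[1,0,0,(-2),2,0]),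
   ([(-11),3,2,(-6),0,0],[(-13),3,2,(-6),0,0]),
   ([5,(-1),(-1),2,0,1],[2,0,0,0,0,0]),
   ([(-8),2,1,(-4),0,1],[(-11),3,2,(-6),1,0]),
   ([0,0,0,0,(-1),0],[0,0,0,0,(-1),0]),
   ([5,(-1),(-1),2,(-1),1],[13,(-3),(-2),6,(-1),0]),
   ([12,(-3),(-2),6,(-3),0],[21,(-5),(-4),8,(-3),2])]"
lemma cp0: "cpok CP0" by code_simp

definition CP1 :: "(int list \<times> int list) list" where
  "CP1 = [([1,0,0,(-2),1,0],[13,(-3),(-2),4,0,0]),
   ([12,(-3),(-2),6,(-2),0],[13,(-3),(-2),4,(-2),0]),
   ([1,0,0,0,0,0],[5,(-1),(-1),1,0,1]),
   ([13,(-3),(-2),6,(-3),0],[16,(-4),(-3),7,(-3),1]),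
   ([1,0,0,(-1),0,0],[0,0,0,(-1),0,0]),
   ([(-8),2,1,(-5),0,1],[(-12),3,2,(-5),0,0]),
   ([(-8),2,1,(-2),0,0],[(-2),1,0,(-2),0,1]),
   ([0,0,0,(-2),0,1],[2,0,0,(-2),0,0])]"
lemma cp1: "cpok CP1" by code_simp

definition CP2 :: "(int list \<times> int list) list" where
  "CP2 = [([2,0,0,0,0,(-1)],[8,(-2),(-1),3,0,(-1)]),
   ([(-4),1,1,(-2),0,(-1)],[(-12),3,2,(-4),1,(-1)]),
   ([5,(-1),(-1),1,(-1),1],[0,0,0,1,(-1),0]),
   ([(-12),3,2,(-5),1,0],[(-7),2,1,(-3),0,0]),
   ([2,0,0,(-2),1,0],[8,(-2),(-1),1,0,0]),
   ([0,0,0,2,(-1),(-1)],[8,(-2),(-1),3,(-1),(-1)]),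
   ([2,0,0,(-1),0,0],[(-4),1,1,(-3),1,0]),
   ([5,(-1),(-1),2,(-1),0],[9,(-2),(-2),4,(-1),1])]"
lemma cp2: "cpok CP2" by code_simp

definition CP3 :: "(int list \<times> int list) list" where
  "CP3 = [([4,(-1),0,0,0,(-1)],[4,(-1),0,1,0,(-1)]),
   ([1,0,0,2,(-1),(-1)],[8,(-2),(-1),5,(-1),(-1)]),
   ([1,0,0,(-2),1,1],[9,(-2),(-1),2,0,0]),
   ([3,(-1),0,3,(-1),(-2)],[5,(-1),0,2,(-1),(-2)]),
   ([1,0,0,2,0,(-1)],[(-4),1,1,0,0,(-1)]),
   ([0,0,0,(-2),0,0],[(-3),1,0,(-2),0,1]),
   ([14,(-3),(-2),5,(-3),0],[11,(-3),(-2),5,(-3),0]),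
   ([(-7),2,1,(-3),1,0],[(-3),1,0,(-1),0,1])]"
lemma cp3: "cpok CP3" by code_simp

definition CP4 :: "(int list \<times> int list) list" where
  "CP4 = [([2,0,0,(-1),(-1),0],[4,(-1),(-1),(-1),(-1),2]),
   ([7,(-1),(-1),2,(-1),0],[9,(-2),(-2),5,(-1),1]),
   ([13,(-3),(-3),4,(-2),3],[14,(-3),(-2),5,(-2),0]),
   ([(-3),1,0,(-4),0,2],[(-12),3,2,(-6),1,0]),
   ([9,(-2),(-2),4,(-2),1],[12,(-3),(-2),5,(-2),0]),
   ([11,(-2),(-2),2,(-1),1],[12,(-3),(-2),4,(-1),0]),
   ([4,(-1),0,2,0,(-2)],[(-8),2,2,(-4),2,(-2)]),
   ([1,0,0,1,0,(-1)],[(-4),1,1,(-2),1,(-1)])]"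
lemma cp4: "cpok CP4" by code_simp

definition CP5 :: "(int list \<times> int list) list" where
  "CP5 = [([9,(-2),(-2),2,(-1),2],[13,(-3),(-2),4,(-1),0]),
   ([3,0,0,0,0,0],[2,0,(-1),(-1),1,3]),
   ([4,0,0,0,0,0],[18,(-4),(-3),8,0,1]),
   ([6,0,0,0,0,0],[(-9),3,1,(-6),4,3])]"
lemma cp5: "cpok CP5" by code_simp

definition CPA :: "(int list \<times> int list) list" where "CPA = CP0 @ CP1 @ CP2 @ CP3 @ CP4 @ CP5"
lemma cpA: "cpok CPA" unfolding CPA_def cpok_def list_all_append using cp0 cp1 cp2 cp3 cp4 cp5 unfolding cpok_def by blast

definition CE0 :: "ent list" where
  "CE0 = [Fv (-2) [5,(-1),(-1),0,0,1] [1,0,0,(-1),1,0] [5,(-1),(-1),0,0,1] [1,0,0,(-1),1,0] [1,0,0,(-2),2,0],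
   Rf 7 [(-11),3,2,(-6),0,0] [(-13),3,2,(-6),0,0],
   Fv (-7) [5,(-1),(-1),2,0,1] [2,0,0,0,0,0] [(-13),3,2,(-6),0,0] [(-11),3,2,(-6),0,0] [(-11),3,2,(-6),1,0],
   Fv 1 [0,0,0,0,(-1),0] [0,0,0,0,(-1),0] [5,(-1),(-1),2,0,1] [2,0,0,0,0,0] [13,(-3),(-2),6,(-1),0],
   Rf 2 [12,(-3),(-2),6,(-3),0] [21,(-5),(-4),8,(-3),2],
   Rf 2 [1,0,0,(-2),1,0] [13,(-3),(-2),4,0,0],
   Rf (-2) [10,(-2),(-2),0,0,2] [1,0,0,(-2),2,0],
   Fv 2 [1,0,0,(-2),2,0] [10,(-2),(-2),0,0,2] [12,(-3),(-2),6,(-2),0] [13,(-3),(-2),4,(-2),0] [1,0,0,(-2),1,0],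
   Fv (-2) [1,0,0,0,0,0] [5,(-1),(-1),1,0,1] [12,(-3),(-2),6,(-3),0] [21,(-5),(-4),8,(-3),2] [16,(-4),(-3),7,(-3),1],
   Rf (-4) [1,0,0,(-1),0,0] [0,0,0,(-1),0,0],
   Fv 2 [0,0,0,(-1),0,0] [1,0,0,(-1),0,0] [(-8),2,1,(-4),0,1] [(-11),3,2,(-6),1,0] [(-12),3,2,(-5),0,0],
   Fv 8 [(-8),2,1,(-2),0,0] [(-2),1,0,(-2),0,1] [0,0,0,(-2),0,1] [2,0,0,(-2),0,0] [(-11),3,2,(-6),1,0],
   Rf (-4) [(-12),3,2,(-5),0,0] [(-8),2,1,(-5),0,1],
   Rf (-4) [2,0,0,0,0,(-1)] [8,(-2),(-1),3,0,(-1)],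
   Fv 4 [(-12),3,2,(-5),0,0] [(-8),2,1,(-5),0,1] [8,(-2),(-1),3,0,(-1)] [2,0,0,0,0,(-1)] [(-12),3,2,(-4),1,(-1)],
   Rf (-2) [5,(-1),(-1),1,(-1),1] [0,0,0,1,(-1),0],
   Rf (-4) [2,0,0,(-2),0,0] [0,0,0,(-2),0,1],
   Fv (-2) [(-12),3,2,(-5),1,0] [(-7),2,1,(-3),0,0] [12,(-3),(-2),6,(-2),0] [13,(-3),(-2),4,(-2),0] [5,(-1),(-1),1,(-1),1],
   Rf (-6) [(-7),2,1,(-3),0,0] [(-12),3,2,(-5),1,0],
   Fv 1 [1,0,0,0,0,0] [5,(-1),(-1),1,0,1] [1,0,0,0,0,0] [5,(-1),(-1),1,0,1] [5,(-1),(-1),2,0,1]]"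
lemma ce0: "list_all (valid CPA) CE0" by code_simp

definition CE1 :: "ent list" where
  "CE1 = [Rf (-4) [2,0,0,(-2),1,0] [8,(-2),(-1),1,0,0],
   Fv (-4) [0,0,0,2,(-1),(-1)] [8,(-2),(-1),3,(-1),(-1)] [0,0,0,(-2),0,1] [2,0,0,(-2),0,0] [0,0,0,0,(-1),0],
   Rf 16 [2,0,0,0,0,0] [5,(-1),(-1),2,0,1],
   Rf 4 [2,0,0,(-1),0,0] [(-4),1,1,(-3),1,0],
   Fv 4 [5,(-1),(-1),2,(-1),0] [9,(-2),(-2),4,(-1),1] [(-4),1,1,(-3),1,0] [2,0,0,(-1),0,0] [0,0,0,(-1),0,0],
   Rf 2 [4,(-1),0,0,0,(-1)] [4,(-1),0,1,0,(-1)],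
   Fv (-8) [(-8),2,1,(-2),0,0] [(-2),1,0,(-2),0,1] [(-4),1,1,(-3),1,0] [2,0,0,(-1),0,0] [(-7),2,1,(-3),0,0],
   Rf (-2) [1,0,0,2,(-1),(-1)] [8,(-2),(-1),5,(-1),(-1)],
   Fv (-2) [1,0,0,(-2),1,1] [9,(-2),(-1),2,0,0] [3,(-1),0,3,(-1),(-2)] [5,(-1),0,2,(-1),(-2)] [4,(-1),0,0,0,(-1)],
   Rf 2 [1,0,0,2,0,(-1)] [(-4),1,1,0,0,(-1)],
   Fv (-2) [0,0,0,(-2),0,0] [(-3),1,0,(-2),0,1] [(-4),1,1,0,0,(-1)] [1,0,0,2,0,(-1)] [(-12),3,2,(-4),1,(-1)],
   Fv 2 [4,(-1),0,1,0,(-1)] [4,(-1),0,0,0,(-1)] [0,0,0,(-1),0,0] [1,0,0,(-1),0,0] [4,(-1),0,1,0,(-1)],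
   Fv (-2) [1,0,0,2,0,(-1)] [(-4),1,1,0,0,(-1)] [(-8),2,1,(-5),0,1] [(-12),3,2,(-5),0,0] [(-12),3,2,(-5),1,0],
   Rf 14 [1,0,0,0,0,0] [5,(-1),(-1),1,0,1],
   Fv (-10) [0,0,0,0,(-1),0] [0,0,0,0,(-1),0] [5,(-1),(-1),1,0,1] [1,0,0,0,0,0] [0,0,0,1,(-1),0],
   Fv 2 [13,(-3),(-2),6,(-3),0] [16,(-4),(-3),7,(-3),1] [1,0,0,(-1),0,0] [0,0,0,(-1),0,0] [11,(-3),(-2),5,(-3),0],
   Rf (-4) [(-7),2,1,(-3),1,0] [(-3),1,0,(-1),0,1],
   Rf 4 [2,0,0,(-1),(-1),0] [4,(-1),(-1),(-1),(-1),2],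
   Rf 4 [7,(-1),(-1),2,(-1),0] [9,(-2),(-2),5,(-1),1],
   Fv (-4) [4,(-1),(-1),(-1),(-1),2] [2,0,0,(-1),(-1),0] [9,(-2),(-2),5,(-1),1] [7,(-1),(-1),2,(-1),0] [14,(-3),(-2),5,(-2),0]]"
lemma ce1: "list_all (valid CPA) CE1" by code_simp

definition CE2 :: "ent list" where
  "CE2 = [Fv (-4) [(-7),2,1,(-3),1,0] [(-3),1,0,(-1),0,1] [0,0,0,0,(-1),0] [0,0,0,0,(-1),0] [(-12),3,2,(-5),1,0],
   Fv 8 [(-8),2,1,(-5),0,1] [(-12),3,2,(-5),0,0] [5,(-1),(-1),1,0,1] [1,0,0,0,0,0] [(-12),3,2,(-6),1,0],
   Fv 4 [2,0,0,(-2),1,0] [8,(-2),(-1),1,0,0] [9,(-2),(-2),4,(-2),1] [12,(-3),(-2),5,(-2),0] [12,(-3),(-2),4,(-1),0],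
   Rf (-4) [4,(-1),0,2,0,(-2)] [(-8),2,2,(-4),2,(-2)],
   Rf 8 [1,0,0,1,0,(-1)] [(-4),1,1,(-2),1,(-1)],
   Fv (-4) [(-4),1,1,(-2),1,(-1)] [1,0,0,1,0,(-1)] [(-4),1,1,(-2),1,(-1)] [1,0,0,1,0,(-1)] [4,(-1),0,2,0,(-2)],
   Rf (-4) [13,(-3),(-2),6,(-3),0] [16,(-4),(-3),7,(-3),1],
   Fv (-4) [3,(-1),0,3,(-1),(-2)] [5,(-1),0,2,(-1),(-2)] [13,(-3),(-3),4,(-2),3] [14,(-3),(-2),5,(-2),0] [13,(-3),(-2),6,(-3),0],
   Fv 8 [0,0,0,2,(-1),(-1)] [8,(-2),(-1),3,(-1),(-1)] [9,(-2),(-2),2,(-1),2] [13,(-3),(-2),4,(-1),0] [12,(-3),(-2),5,(-2),0],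
   Rf 4 [(-3),1,0,(-4),0,2] [(-12),3,2,(-6),1,0],
   Rf 4 [11,(-2),(-2),2,(-1),1] [12,(-3),(-2),4,(-1),0],
   Fv (-4) [(-12),3,2,(-6),1,0] [(-3),1,0,(-4),0,2] [12,(-3),(-2),4,(-1),0] [11,(-2),(-2),2,(-1),1] [(-3),1,0,(-2),0,1],
   Rf (-6) [8,(-2),(-1),3,(-1),(-1)] [0,0,0,2,(-1),(-1)],
   Fv (-6) [4,(-1),0,1,0,(-1)] [4,(-1),0,0,0,(-1)] [5,(-1),(-1),1,0,1] [1,0,0,0,0,0] [1,0,0,(-2),1,1],
   Rf (-6) [9,(-2),(-1),2,0,0] [1,0,0,(-2),1,1],
   Rf 1 [14,(-3),(-2),5,(-3),0] [11,(-3),(-2),5,(-3),0],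
   Fv (-1) [3,0,0,0,0,0] [2,0,(-1),(-1),1,3] [11,(-3),(-2),5,(-3),0] [14,(-3),(-2),5,(-3),0] [11,(-3),(-2),5,(-3),0],
   Fv 6 [3,(-1),0,3,(-1),(-2)] [5,(-1),0,2,(-1),(-2)] [2,0,(-1),(-1),1,3] [3,0,0,0,0,0] [2,0,0,0,0,0],
   Fv 3 [2,0,0,0,0,0] [5,(-1),(-1),2,0,1] [2,0,0,0,0,0] [5,(-1),(-1),2,0,1] [18,(-4),(-3),8,0,1],
   Rf (-7) [3,0,0,0,0,0] [2,0,(-1),(-1),1,3]]"
lemma ce2: "list_all (valid CPA) CE2" by code_simp

definition CEA :: "ent list" where "CEA = CE0 @ CE1 @ CE2"
lemma ceA: "list_all (valid CPA) CEA" unfolding CEA_def list_all_append using ce0 ce1 ce2 by blast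
definition TG :: "(int list \<times> int) list" where "TG = [([6,0,0,0,0,0],1), ([4,0,0,0,0,0],(-3)), ([3,0,0,0,0,0],(-8)), ([2,0,0,0,0,0],21), ([1,0,0,0,0,0],24), ([0,0,0,0,0,0],(-11))]"
lemma normA: "normf (comb CEA @ negf TG) = []" by code_simp

fun lnvals :: "real \<Rightarrow> q4 list \<Rightarrow> int list \<Rightarrow> real" where
  "lnvals r (g#gs) (k#ks) = of_int k * ln (nfv r g) + lnvals r gs ks"
| "lnvals r _ _ = 0"

lemma ln_powi: "x > 0 \<Longrightarrow> ln (x powi k) = of_int k * ln (x::real)"
  by (cases "k \<ge> 0") (auto simp: power_int_def ln_realpow ln_inverse)

lemma vals_pos: "\<forall>g\<in>set gs. nfv r g > 0 \<Longrightarrow> vals r gs ks > 0"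
proof (induction gs arbitrary: ks)
  case Nil then show ?case by simp
next
  case (Cons g gs) then show ?case by (cases ks) auto
qed

lemma ln_vals: "\<forall>g\<in>set gs. nfv r g > 0 \<Longrightarrow> ln (vals r gs ks) = lnvals r gs ks"
proof (induction gs arbitrary: ks)
  case Nil then show ?case by simp
next
  case (Cons g gs)
  show ?case
  proof (cases ks)
    case Nil then show ?thesis by simp
  next
    case (Cons k ks')
    have g: "nfv r g > 0" using Cons.prems by simp
    have p: "vals r gs ks' > 0" using Cons.prems vals_pos by simp
    show ?thesis unfolding Cons using Cons.IH[of ks'] Cons.prems g p
      by (simp add: ln_mult ln_powi)
  qed
qed

theorem mainTheorem4:
  fixes r2 :: real
  assumes "r2 = (1 + sqrt 33 - sqrt (2 * (9 + sqrt 33))) / 4"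
  shows "Li2 (r2^6) - 3 * Li2 (r2^4) - 8 * Li2 (r2^3) + 21 * Li2 (r2^2)
           + 24 * Li2 r2 - 11 * zeta2 = - 6 * (ln r2)^2"
proof -
  define s where "s = sqrt 33"
  define t where "t = sqrt (2 * (9 + s))"
  have r: "r2 = (1 + s - t)/4" using assms unfolding s_def t_def by simp
  have s2: "s^2 = 33" unfolding s_def by simp
  have s_lo: "5.744562 < s" unfolding s_def by (rule real_less_rsqrt) (simp add: power2_eq_square)
  have s_hi: "s < 5.744563" unfolding s_def by (rule real_less_lsqrt) (simp_all add: power2_eq_square)
  have spos: "0 \<le> 2 * (9 + s)" using s_lo by simp
  have t2: "t^2 = 2*(9+s)" unfolding t_def using spos by simp
  have t_lo: "5.430388 < t" unfolding t_def by (rule real_less_rsqrt) (use s_lo in \<open>simp add: power2_eq_square\<close>)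
  have t_hi: "t < 5.430391" unfolding t_def by (rule real_less_lsqrt) (use s_hi in \<open>simp_all add: power2_eq_square\<close>)
  have r_lo: "0.3285 < r2" using r s_lo t_hi by simp
  have r_hi: "r2 < 0.3286" using r s_hi t_lo by simp
  have rt: "t = 1 + s - 4*r2" using r by simp
  have e1: "(1 + s - 4*r2)^2 = 2*(9+s)" using t2 rt by simp
  have e1': "(1 + s - 4*r2)^2 = 1 + s^2 + 16*r2^2 + 2* s - 8*r2 - 8*r2* s"
    by (simp add: power2_eq_square algebra_simps)
  have e2: "r2 * s = 2*r2^2 - r2 + 2" using e1 e1' s2 by (simp add: algebra_simps) linarith?
  have "(r2* s)^2 = r2^2 * 33" using s2 by (simp add: power_mult_distrib)
  then have e3: "(2*r2^2 - r2 + 2)^2 = 33 * r2^2" using e2 by simp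
  have e3': "(2*r2^2 - r2 + 2)^2 = 4*r2^4 - 4*r2^3 + 9*r2^2 - 4*r2 + 4"
    by (simp add: power2_eq_square power3_eq_cube power4_eq_xxxx algebra_simps)
  have r4: "r2^4 = r2^3 + 6*r2^2 + r2 - 1" using e3 e3' by linarith
  have rpos: "0 < r2" using r_lo by simp
  have sq: "(0.3285::real)^2 < r2^2" by (rule power_strict_mono) (use r_lo in auto)
  have cb: "(0.3285::real)^3 < r2^3" by (rule power_strict_mono) (use r_lo in auto)
  have cb2: "r2^3 < (0.3286::real)^3" by (rule power_strict_mono) (use r_hi rpos in auto)
  have sq2: "0 < r2^2" using rpos by simp
  have gpos: "\<forall>g\<in>set gl. nfv r2 g > 0"
    unfolding gl_def using rpos sq cb cb2 sq2 r_lo by (simp add: power2_eq_square power3_eq_cube)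
  interpret rctx r2 by unfold_locales (rule r4, rule gpos)
  have main: "sem (\<lambda>e. Lr (val r2 e)) TG = 0" by (rule cert_sound[OF cpA ceA normA])
  have v: "val r2 [6,0,0,0,0,0] = r2^6" "val r2 [4,0,0,0,0,0] = r2^4" "val r2 [3,0,0,0,0,0] = r2^3"
     "val r2 [2,0,0,0,0,0] = r2^2" "val r2 [1,0,0,0,0,0] = r2" "val r2 [0,0,0,0,0,0] = 1"
    by (simp_all add: val_def gl_def)
  have main2: "Lr (r2^6) - 3 * Lr (r2^4) - 8 * Lr (r2^3) + 21 * Lr (r2^2) + 24 * Lr r2 - 11 * Lr 1 = 0"
    using main unfolding TG_def sem_def by (simp add: v)
  have c6: "1 - val r2 [6,0,0,0,0,0] = val r2 [-9,3,1,-6,4,3]" by (rule cchk_sound) code_simp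
  have c4: "1 - val r2 [4,0,0,0,0,0] = val r2 [18,-4,-3,8,0,1]" by (rule cchk_sound) code_simp
  have c3: "1 - val r2 [3,0,0,0,0,0] = val r2 [2,0,-1,-1,1,3]" by (rule cchk_sound) code_simp
  have c2: "1 - val r2 [2,0,0,0,0,0] = val r2 [5,-1,-1,2,0,1]" by (rule cchk_sound) code_simp
  have c1: "1 - val r2 [1,0,0,0,0,0] = val r2 [5,-1,-1,1,0,1]" by (rule cchk_sound) code_simp
  have lv: "ln (val r2 e) = lnvals r2 gl e" for e
    unfolding val_def by (rule ln_vals[OF gpos])
  have L6: "ln (1 - r2^6) = lnvals r2 gl [-9,3,1,-6,4,3]" using c6 v lv by simp
  have L4: "ln (1 - r2^4) = lnvals r2 gl [18,-4,-3,8,0,1]" using c4 v lv by simp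
  have L3: "ln (1 - r2^3) = lnvals r2 gl [2,0,-1,-1,1,3]" using c3 v lv by simp
  have L2: "ln (1 - r2^2) = lnvals r2 gl [5,-1,-1,2,0,1]" using c2 v lv by simp
  have L1: "ln (1 - r2) = lnvals r2 gl [5,-1,-1,1,0,1]" using c1 v lv by simp
  have key: "6 * ln (1 - r2^6) - 12 * ln (1 - r2^4) - 24 * ln (1 - r2^3) + 42 * ln (1 - r2^2) + 24 * ln (1 - r2) = 12 * ln r2"
    unfolding L6 L4 L3 L2 L1 by (simp add: gl_def algebra_simps)
  have key2: "ln r2 * (6 * ln (1 - r2^6) - 12 * ln (1 - r2^4) - 24 * ln (1 - r2^3) + 42 * ln (1 - r2^2) + 24 * ln (1 - r2)) = 12 * (ln r2)^2"
    unfolding key by (simp add: power2_eq_square)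
  have main3: "Li2 (r2^6) + 6 * ln r2 * ln (1 - r2^6) / 2 - 3 * (Li2 (r2^4) + 4 * ln r2 * ln (1 - r2^4) / 2)
     - 8 * (Li2 (r2^3) + 3 * ln r2 * ln (1 - r2^3) / 2) + 21 * (Li2 (r2^2) + 2 * ln r2 * ln (1 - r2^2) / 2)
     + 24 * (Li2 r2 + ln r2 * ln (1 - r2) / 2) - 11 * (pi^2/6) = 0"
    using main2 unfolding Lr_def by (simp add: ln_realpow Li2_one)
  show ?thesis using main3 key2 unfolding zeta2_def by (simp add: algebra_simps)
qed

end
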